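(* If $f$ satisfies the rate conditions of order $0$, then for every $z\in D$, $f(J_u(z,1/L)\cap D)\subset\mathrm{int}\,J_u(f(z),1/L)\cup\{f(z)\}$.
   Context: $c,u,s$ positive integers, $\Lambda=(\mathbb{R}/\mathbb{Z})^c$, $R_\Lambda=\tfrac12$; points are "in the same chart" if their $\lambda$-components have lifts to $\mathbb{R}^c$ at distance $\le R_\Lambda$; differences, norms, cones and derivatives are computed in such lifts. $\overline B_n(R)$ closed ball of radius $R$ at $0$ in $\mathbb{R}^n$; Euclidean norms. $0<R<R_\Lambda/2$, $D=\Lambda\times\overline B_u(R)\times\overline B_s(R)$, points $z=(\lambda,x,y)$, projections $\pi_\lambda,\pi_x,\pi_y,\pi_{(\lambda,y)}$; $f:D\to\Lambda\times\mathbb{R}^u\times\mathbb{R}^s$ is $C^1$, $f=(f_\lambda,f_x,f_y)$. $m(A)=\max\{c:\|Av\|\ge c\|v\|\}$, $m(\mathbf A)=\inf_{A\in\mathbf A}m(A)$; $[\partial g/\partial w(U)]$ = set of matrices with $(i,j)$ entry in $[\inf_U\partial g_i/\partial w_j,\sup_U\partial g_i/\partial w_j]$; $P(z)=\{w\in D:\|\pi_\lambda w-\pi_\lambda z\|\le R_\Lambda/2\}$. Fix $L\in(2R/R_\Lambda,1)$. $\mu_{s,1}=\sup_D\{\|\partial_yf_y\|+\frac1L\|\partial_{(\lambda,x)}f_y\|\}$, $\xi_{u,1,P}=\inf_{z\in D}m[\partial_xf_x(P(z))]-\frac1L\sup_D\|\partial_{(\lambda,y)}f_x\|$, $\mu_{cs,1}=\sup_D\{\|\partial_{(\lambda,y)}f_{(\lambda,y)}\|+L\|\partial_xf_{(\lambda,y)}\|\}$,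 $\xi_{cu,1,P}=\inf_{z\in D}m[\partial_{(\lambda,x)}f_{(\lambda,x)}(P(z))]-L\sup_D\|\partial_yf_{(\lambda,x)}\|$. Rate conditions of order $0$: $\mu_{s,1}<1<\xi_{u,1,P}$, $\mu_{cs,1}<\xi_{u,1,P}$, $\mu_{s,1}<\xi_{cu,1,P}$. Unstable cone: $J_u(z,M)=\{(\lambda,x,y):\|(\lambda,y)-\pi_{(\lambda,y)}z\|\le M\|x-\pi_xz\|\}$. *)

theory Defs
  imports "HOL-Analysis.Analysis"
begin

type_synonym ('c,'u,'s) pt = "(real^'c) \<times> (real^'u) \<times> (real^'s)"

text \<open>Torus \<Lambda> = (R/Z)^c is represented through lifts in real^'c; integer lattice and
  torus distance (minimal lift distance).\<close>
definition intvecs :: "(real^'n) set" where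
  "intvecs = {k. \<forall>i. k $ i \<in> \<int>}"

definition tdist :: "real^'n \<Rightarrow> real^'n \<Rightarrow> real" where
  "tdist a b = (INF k\<in>intvecs. norm (a - b - k))"

definition RLam :: real where "RLam = 1/2"

definition Dom :: "real \<Rightarrow> ('c::finite,'u::finite,'s::finite) pt set" where
  "Dom R = UNIV \<times> cball 0 R \<times> cball 0 R"

definition Pset :: "real \<Rightarrow> ('c::finite,'u::finite,'s::finite) pt \<Rightarrow> ('c,'u,'s) pt set" where
  "Pset R z = {w \<in> Dom R. tdist (fst w) (fst z) \<le> RLam / 2}"

definition minnorm :: "('a::real_normed_vector \<Rightarrow> 'b::real_normed_vector) \<Rightarrow> real" where
  "minnorm A = Sup {c. \<forall>v. c * norm v \<le> norm (A v)}"

definition interval_maps :: "('p \<Rightarrow> ('a::euclidean_space \<Rightarrow> 'b::euclidean_space)) \<Rightarrow> 'p set \<Rightarrow> ('a \<Rightarrow> 'b) set" where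
  "interval_maps g U = {A. linear A \<and> (\<forall>i\<in>Basis. \<forall>j\<in>Basis.
      (INF w\<in>U. g w j \<bullet> i) \<le> A j \<bullet> i \<and> A j \<bullet> i \<le> (SUP w\<in>U. g w j \<bullet> i))}"

definition minnorm_set :: "('a::real_normed_vector \<Rightarrow> 'b::real_normed_vector) set \<Rightarrow> real" where
  "minnorm_set S = (INF A\<in>S. minnorm A)"

definition dy_fy :: "(('c::finite,'u::finite,'s::finite) pt \<Rightarrow> ('c,'u,'s) pt) \<Rightarrow> real^'s \<Rightarrow> real^'s" where
  "dy_fy A = (\<lambda>v. snd (snd (A (0, 0, v))))"
definition dlx_fy :: "(('c::finite,'u::finite,'s::finite) pt \<Rightarrow> ('c,'u,'s) pt) \<Rightarrow> ((real^'c) \<times> (real^'u)) \<Rightarrow> real^'s" where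
  "dlx_fy A = (\<lambda>(a,b). snd (snd (A (a, b, 0))))"
definition dx_fx :: "(('c::finite,'u::finite,'s::finite) pt \<Rightarrow> ('c,'u,'s) pt) \<Rightarrow> real^'u \<Rightarrow> real^'u" where
  "dx_fx A = (\<lambda>b. fst (snd (A (0, b, 0))))"
definition dly_fx :: "(('c::finite,'u::finite,'s::finite) pt \<Rightarrow> ('c,'u,'s) pt) \<Rightarrow> ((real^'c) \<times> (real^'s)) \<Rightarrow> real^'u" where
  "dly_fx A = (\<lambda>(a,c). fst (snd (A (a, 0, c))))"
definition dly_fly :: "(('c::finite,'u::finite,'s::finite) pt \<Rightarrow> ('c,'u,'s) pt) \<Rightarrow> ((real^'c) \<times> (real^'s)) \<Rightarrow> ((real^'c) \<times> (real^'s))" where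
  "dly_fly A = (\<lambda>(a,c). (fst (A (a, 0, c)), snd (snd (A (a, 0, c)))))"
definition dx_fly :: "(('c::finite,'u::finite,'s::finite) pt \<Rightarrow> ('c,'u,'s) pt) \<Rightarrow> real^'u \<Rightarrow> ((real^'c) \<times> (real^'s))" where
  "dx_fly A = (\<lambda>b. (fst (A (0, b, 0)), snd (snd (A (0, b, 0)))))"
definition dlx_flx :: "(('c::finite,'u::finite,'s::finite) pt \<Rightarrow> ('c,'u,'s) pt) \<Rightarrow> ((real^'c) \<times> (real^'u)) \<Rightarrow> ((real^'c) \<times> (real^'u))" where
  "dlx_flx A = (\<lambda>(a,b). (fst (A (a, b, 0)), fst (snd (A (a, b, 0)))))"
definition dy_flx :: "(('c::finite,'u::finite,'s::finite) pt \<Rightarrow> ('c,'u,'s) pt) \<Rightarrow> real^'s \<Rightarrow> ((real^'c) \<times> (real^'u))" where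
  "dy_flx A = (\<lambda>c. (fst (A (0, 0, c)), fst (snd (A (0, 0, c)))))"

definition mu_s1 :: "real \<Rightarrow> real \<Rightarrow> (('c::finite,'u::finite,'s::finite) pt \<Rightarrow> ('c,'u,'s) pt \<Rightarrow>\<^sub>L ('c,'u,'s) pt) \<Rightarrow> real" where
  "mu_s1 R L Df = (SUP z\<in>Dom R. onorm (dy_fy (blinfun_apply (Df z))) + (1/L) * onorm (dlx_fy (blinfun_apply (Df z))))"

definition xi_u1P :: "real \<Rightarrow> real \<Rightarrow> (('c::finite,'u::finite,'s::finite) pt \<Rightarrow> ('c,'u,'s) pt \<Rightarrow>\<^sub>L ('c,'u,'s) pt) \<Rightarrow> real" where
  "xi_u1P R L Df = (INF z\<in>Dom R. minnorm_set (interval_maps (\<lambda>w. dx_fx (blinfun_apply (Df w))) (Pset R z)))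
      - (1/L) * (SUP z\<in>Dom R. onorm (dly_fx (blinfun_apply (Df z))))"

definition mu_cs1 :: "real \<Rightarrow> real \<Rightarrow> (('c::finite,'u::finite,'s::finite) pt \<Rightarrow> ('c,'u,'s) pt \<Rightarrow>\<^sub>L ('c,'u,'s) pt) \<Rightarrow> real" where
  "mu_cs1 R L Df = (SUP z\<in>Dom R. onorm (dly_fly (blinfun_apply (Df z))) + L * onorm (dx_fly (blinfun_apply (Df z))))"

definition xi_cu1P :: "real \<Rightarrow> real \<Rightarrow> (('c::finite,'u::finite,'s::finite) pt \<Rightarrow> ('c,'u,'s) pt \<Rightarrow>\<^sub>L ('c,'u,'s) pt) \<Rightarrow> real" where
  "xi_cu1P R L Df = (INF z\<in>Dom R. minnorm_set (interval_maps (\<lambda>w. dlx_flx (blinfun_apply (Df w))) (Pset R z)))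
      - L * (SUP z\<in>Dom R. onorm (dy_flx (blinfun_apply (Df z))))"

definition rate_conditions_0 :: "real \<Rightarrow> real \<Rightarrow> (('c::finite,'u::finite,'s::finite) pt \<Rightarrow> ('c,'u,'s) pt \<Rightarrow>\<^sub>L ('c,'u,'s) pt) \<Rightarrow> bool" where
  "rate_conditions_0 R L Df \<longleftrightarrow>
     mu_s1 R L Df < 1 \<and> 1 < xi_u1P R L Df \<and> mu_cs1 R L Df < xi_u1P R L Df \<and> mu_s1 R L Df < xi_cu1P R L Df"

text \<open>Unstable cone, differences taken in lifted coordinates.\<close>
definition Ju :: "('c::finite,'u::finite,'s::finite) pt \<Rightarrow> real \<Rightarrow> ('c,'u,'s) pt set" where
  "Ju z M = {w. norm (fst w - fst z, snd (snd w) - snd (snd z)) \<le> M * norm (fst (snd w) - fst (snd z))}"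

end

theory Submission
  imports Defs
begin

lemma Dom_shift: "((fst w + k, snd w) \<in> Dom R) = (w \<in> Dom R)"
  by (auto simp: Dom_def mem_Times_iff)

lemma shift_const:
  fixes f :: "('c::finite,'u::finite,'s::finite) pt \<Rightarrow> ('c,'u,'s) pt"
    and Df :: "('c,'u,'s) pt \<Rightarrow> ('c,'u,'s) pt \<Rightarrow>\<^sub>L ('c,'u,'s) pt"
  assumes deriv: "\<And>w. w \<in> Dom R \<Longrightarrow> (f has_derivative blinfun_apply (Df w)) (at w within Dom R)"
    and torus: "\<And>k w. k \<in> intvecs \<Longrightarrow> w \<in> Dom R \<Longrightarrow>
                  fst (f (fst w + k, snd w)) - fst (f w) \<in> intvecs \<and> snd (f (fst w + k, snd w)) = snd (f w)"
    and k: "k \<in> intvecs" and w0: "w0 \<in> Dom R"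
  shows "\<forall>w\<in>Dom R. f (fst w + k, snd w) = f w + (fst (f (fst w0 + k, snd w0)) - fst (f w0), 0)"
proof -
  have fc: "continuous_on (Dom R) f"
    using deriv has_derivative_continuous continuous_on_eq_continuous_within by blast
  have fc2: "continuous_on (Dom R) (\<lambda>w. f (fst w + k, snd w))"
    by (rule continuous_on_compose2[OF fc]) (auto intro!: continuous_intros simp: Dom_def mem_Times_iff)
  define g where "g w = fst (f (fst w + k, snd w)) - fst (f w)" for w
  have gc: "continuous_on (Dom R) g" unfolding g_def
    by (intro continuous_intros continuous_on_compose2[OF fc2] continuous_on_compose2[OF fc]) auto
  have conn: "connected (Dom R :: ('c,'u,'s) pt set)"
    unfolding Dom_def by (intro convex_connected convex_Times convex_UNIV convex_cball)
  have gi: "g w \<in> intvecs" if "w \<in> Dom R" for w using torus[OF k that] by (simp add: g_def)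
  have "(\<lambda>w. g w $ i) constant_on Dom R" for i
  proof (rule continuous_discrete_range_constant[OF conn])
    show "continuous_on (Dom R) (\<lambda>w. g w $ i)" by (intro continuous_intros gc)
    fix x :: "('c,'u,'s) pt" assume x: "x \<in> Dom R"
    show "\<exists>e>0. \<forall>y. y \<in> (Dom R :: ('c,'u,'s) pt set) \<and> g y $ i \<noteq> g x $ i \<longrightarrow> e \<le> norm (g y $ i - g x $ i)"
    proof (intro exI[of _ 1] conjI allI impI)
      fix y :: "('c,'u,'s) pt" assume y: "y \<in> Dom R \<and> g y $ i \<noteq> g x $ i"
      then have "g y $ i - g x $ i \<in> \<int>" using gi x unfolding intvecs_def by auto
      then obtain n where n: "g y $ i - g x $ i = of_int n" by (auto elim: Ints_cases)
      with y have "n \<noteq> 0" by auto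
      hence "1 \<le> \<bar>n\<bar>" by linarith
      then show "1 \<le> norm (g y $ i - g x $ i)" using n by (metis of_int_1_le_iff of_int_abs real_norm_def)
    qed simp
  qed
  then have "g w $ i = g w0 $ i" if "w \<in> Dom R" for w :: "('c,'u,'s) pt" and i using that w0 unfolding constant_on_def by metis
  then have geq: "g w = g w0" if "w \<in> Dom R" for w :: "('c,'u,'s) pt" using that by (simp add: vec_eq_iff)
  show ?thesis
  proof
    fix w :: "('c,'u,'s) pt" assume w: "w \<in> Dom R"
    have "fst (f (fst w + k, snd w)) = fst (f w) + g w0" using geq[OF w] by (simp add: g_def algebra_simps)
    moreover have "snd (f (fst w + k, snd w)) = snd (f w)" using torus[OF k w] by simp
    ultimately show "f (fst w + k, snd w) = f w + (fst (f (fst w0 + k, snd w0)) - fst (f w0), 0)"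
      by (simp add: prod_eq_iff g_def)
  qed
qed
lemma interior_Dom: "interior (Dom R) = UNIV \<times> ball 0 R \<times> ball 0 R"
  by (simp add: Dom_def interior_Times interior_cball)

lemma Df_shift:
  fixes f :: "('c::finite,'u::finite,'s::finite) pt \<Rightarrow> ('c,'u,'s) pt"
    and Df :: "('c,'u,'s) pt \<Rightarrow> ('c,'u,'s) pt \<Rightarrow>\<^sub>L ('c,'u,'s) pt"
  assumes deriv: "\<And>w. w \<in> Dom R \<Longrightarrow> (f has_derivative blinfun_apply (Df w)) (at w within Dom R)"
    and torus: "\<And>k w. k \<in> intvecs \<Longrightarrow> w \<in> Dom R \<Longrightarrow>
                  fst (f (fst w + k, snd w)) - fst (f w) \<in> intvecs \<and> snd (f (fst w + k, snd w)) = snd (f w)"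
    and k: "k \<in> intvecs" and w: "w \<in> interior (Dom R)"
  shows "Df (fst w + k, snd w) = Df w"
proof -
  have wD: "w \<in> Dom R" using w interior_subset by blast
  have w': "(fst w + k, snd w) \<in> interior (Dom R)" using w by (simp add: interior_Dom mem_Times_iff)
  have w'D: "(fst w + k, snd w) \<in> Dom R" using w' interior_subset by blast
  define C where "C = (fst (f (fst w + k, snd w)) - fst (f w), 0 :: (real^'u) \<times> (real^'s))"
  have eq: "f (u + (k,0)) = f u + C" if "u \<in> interior (Dom R)" for u
  proof -
    have uD: "u \<in> Dom R" using that interior_subset by blast
    have "u + (k,0) = (fst u + k, snd u)" by (simp add: prod_eq_iff)
    then show ?thesis using shift_const[OF deriv torus k wD] uD unfolding C_def by simp
  qed
  have d1: "(f has_derivative blinfun_apply (Df (fst w + k, snd w))) (at (w + (k,0)))"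
    using deriv[OF w'D] at_within_interior[OF w'] by (simp add: plus_prod_def)
  have "((\<lambda>u. u + (k,0)) has_derivative id) (at w)"
    by (rule has_derivative_eq_rhs, rule has_derivative_add_const, rule has_derivative_ident) (simp add: id_def)
  from has_derivative_compose[OF this d1]
  have A: "((\<lambda>u. f (u + (k,0))) has_derivative blinfun_apply (Df (fst w + k, snd w))) (at w)" by simp
  have "((\<lambda>u. f u + C) has_derivative blinfun_apply (Df w)) (at w)"
    using has_derivative_add_const[OF deriv[OF wD]] at_within_interior[OF w] by simp
  then have B: "((\<lambda>u. f (u + (k,0))) has_derivative blinfun_apply (Df w)) (at w)"
    by (rule has_derivative_transform_within_open[OF _ open_interior w]) (simp add: eq)
  show ?thesis using has_derivative_unique[OF A B] by (intro blinfun_eqI) simp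
qed
lemma closure_int_Dom: "0 < R \<Longrightarrow> closure (interior (Dom R)) = Dom R"
  by (subst interior_Dom) (simp add: Dom_def closure_Times closure_ball)

lemma Df_bounded:
  fixes f :: "('c::finite,'u::finite,'s::finite) pt \<Rightarrow> ('c,'u,'s) pt"
    and Df :: "('c,'u,'s) pt \<Rightarrow> ('c,'u,'s) pt \<Rightarrow>\<^sub>L ('c,'u,'s) pt"
  assumes R: "0 < R"
    and deriv: "\<And>w. w \<in> Dom R \<Longrightarrow> (f has_derivative blinfun_apply (Df w)) (at w within Dom R)"
    and cont: "continuous_on (Dom R) Df"
    and torus: "\<And>k w. k \<in> intvecs \<Longrightarrow> w \<in> Dom R \<Longrightarrow>
                  fst (f (fst w + k, snd w)) - fst (f w) \<in> intvecs \<and> snd (f (fst w + k, snd w)) = snd (f w)"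
  shows "\<exists>B. \<forall>q\<in>Dom R. norm (Df q) \<le> B"
proof -
  define C :: "('c,'u,'s) pt set" where "C = cbox 0 (vec 1) \<times> cball 0 R \<times> cball 0 R"
  have CD: "C \<subseteq> Dom R" by (auto simp: C_def Dom_def)
  have "compact C" unfolding C_def by (intro compact_Times compact_cbox compact_cball)
  then have "compact (Df ` C)" by (rule compact_continuous_image[OF continuous_on_subset[OF cont CD]])
  then obtain B where B: "\<And>q. q \<in> C \<Longrightarrow> norm (Df q) \<le> B"
    using compact_imp_bounded bounded_iff by (metis image_eqI)
  have "norm (Df q) \<le> B" if q: "q \<in> interior (Dom R)" for q
  proof -
    define k :: "real^'c" where "k = (\<chi> i. - of_int (floor (fst q $ i)))"
    have k: "k \<in> intvecs" by (simp add: k_def intvecs_def)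
    have "(fst q + k, snd q) \<in> C" using q
      by (auto simp: C_def k_def mem_box_cart interior_Dom mem_Times_iff)
         (smt (verit) real_of_int_floor_add_one_gt)
    then show ?thesis using B Df_shift[OF deriv torus k q] by metis
  qed
  then show ?thesis
    using continuous_on_closure_norm_le[of "interior (Dom R)" Df] cont closure_int_Dom[OF R] by metis
qed


lemma norm_fss: "norm (fst u, snd (snd u)) \<le> norm (u :: 'a::real_normed_vector \<times> 'b::real_normed_vector \<times> 'c::real_normed_vector)"
  by (cases u) (auto simp: norm_Pair intro!: real_sqrt_le_mono)

lemma norm_0mid: "norm (a, 0::'b::real_normed_vector, c) = norm (a::'a::real_normed_vector, c::'c::real_normed_vector)"
  by (simp add: norm_Pair)
lemma norm_mid: "norm (0::'a::real_normed_vector, b, 0::'c::real_normed_vector) = norm (b::'b::real_normed_vector)"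
  by (simp add: norm_Pair)

lemma fs_le: "norm (fst (snd u)) \<le> norm u"
proof -
  have "norm (fst (snd u)) \<le> norm (snd u)" using norm_fst_le[of "fst (snd u)" "snd (snd u)"] by simp
  also have "\<dots> \<le> norm u" using norm_snd_le[of "snd u" "fst u"] by simp
  finally show ?thesis .
qed

lemma A_add1: "blinfun_apply A (x+x', 0, y+y') = blinfun_apply A (x,0,y) + blinfun_apply A (x',0,y')"
  using blinfun.add_right[of A "(x,0,y)" "(x',0,y')"] by simp
lemma A_add2: "blinfun_apply A (0, x+x', 0) = blinfun_apply A (0,x,0) + blinfun_apply A (0,x',0)"
  using blinfun.add_right[of A "(0,x,0)" "(0,x',0)"] by simp
lemma A_sc1: "blinfun_apply A (r *\<^sub>R x, 0, r *\<^sub>R y) = r *\<^sub>R blinfun_apply A (x,0,y)"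
  using blinfun.scaleR_right[of A r "(x,0,y)"] by simp
lemma A_sc2: "blinfun_apply A (0, r *\<^sub>R x, 0) = r *\<^sub>R blinfun_apply A (0,x,0)"
  using blinfun.scaleR_right[of A r "(0,x,0)"] by simp
lemmas A_lin = A_add1 A_add2 A_sc1 A_sc2

lemma bl_dx_fx: "bounded_linear (dx_fx (blinfun_apply A))" and on_dx_fx: "onorm (dx_fx (blinfun_apply A)) \<le> norm A"
proof -
  have n: "norm (dx_fx (blinfun_apply A) b) \<le> norm b * norm A" for b
    unfolding dx_fx_def using fs_le[of "blinfun_apply A (0,b,0)"] norm_blinfun[of A "(0,b,0)"]
    by (simp add: norm_mid mult.commute)
  show "bounded_linear (dx_fx (blinfun_apply A))"
    by (rule bounded_linear_intro[OF _ _ n]) (simp_all add: dx_fx_def A_lin)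
  show "onorm (dx_fx (blinfun_apply A)) \<le> norm A" by (rule onorm_le) (use n in \<open>simp add: mult.commute\<close>)
qed

lemma bl_dly_fx: "bounded_linear (dly_fx (blinfun_apply A))" and on_dly_fx: "onorm (dly_fx (blinfun_apply A)) \<le> norm A"
proof -
  have n: "norm (dly_fx (blinfun_apply A) p) \<le> norm p * norm A" for p
    unfolding dly_fx_def using fs_le[of "blinfun_apply A (fst p,0,snd p)"] norm_blinfun[of A "(fst p,0,snd p)"]
    by (cases p) (simp add: norm_0mid mult.commute)
  show "bounded_linear (dly_fx (blinfun_apply A))"
    by (rule bounded_linear_intro[OF _ _ n]) (auto simp: dly_fx_def A_lin split: prod.splits)
  show "onorm (dly_fx (blinfun_apply A)) \<le> norm A" by (rule onorm_le) (use n in \<open>simp add: mult.commute\<close>)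
qed

lemma bl_dly_fly: "bounded_linear (dly_fly (blinfun_apply A))" and on_dly_fly: "onorm (dly_fly (blinfun_apply A)) \<le> norm A"
proof -
  have n: "norm (dly_fly (blinfun_apply A) p) \<le> norm p * norm A" for p
    unfolding dly_fly_def using norm_fss[of "blinfun_apply A (fst p,0,snd p)"] norm_blinfun[of A "(fst p,0,snd p)"]
    by (cases p) (simp add: norm_0mid mult.commute)
  show "bounded_linear (dly_fly (blinfun_apply A))"
    by (rule bounded_linear_intro[OF _ _ n]) (auto simp: dly_fly_def A_lin split: prod.splits)
  show "onorm (dly_fly (blinfun_apply A)) \<le> norm A" by (rule onorm_le) (use n in \<open>simp add: mult.commute\<close>)
qed

lemma bl_dx_fly: "bounded_linear (dx_fly (blinfun_apply A))" and on_dx_fly: "onorm (dx_fly (blinfun_apply A)) \<le> norm A"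
proof -
  have n: "norm (dx_fly (blinfun_apply A) b) \<le> norm b * norm A" for b
    unfolding dx_fly_def using norm_fss[of "blinfun_apply A (0,b,0)"] norm_blinfun[of A "(0,b,0)"]
    by (simp add: norm_mid mult.commute)
  show "bounded_linear (dx_fly (blinfun_apply A))"
    by (rule bounded_linear_intro[OF _ _ n]) (simp_all add: dx_fly_def A_lin)
  show "onorm (dx_fly (blinfun_apply A)) \<le> norm A" by (rule onorm_le) (use n in \<open>simp add: mult.commute\<close>)
qed

lemma split_x: "fst (snd (blinfun_apply A (a,b,c))) = dx_fx (blinfun_apply A) b + dly_fx (blinfun_apply A) (a,c)"
proof -
  have "(a,b,c) = (0,b,0) + (a,0,c)" by simp
  then show ?thesis unfolding dx_fx_def dly_fx_def using blinfun.add_right[of A "(0,b,0)" "(a,0,c)"] by simp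
qed

lemma split_ly: "(fst (blinfun_apply A (a,b,c)), snd (snd (blinfun_apply A (a,b,c)))) = dly_fly (blinfun_apply A) (a,c) + dx_fly (blinfun_apply A) b"
proof -
  have "(a,b,c) = (0,b,0) + (a,0,c)" by simp
  then show ?thesis unfolding dx_fly_def dly_fly_def using blinfun.add_right[of A "(0,b,0)" "(a,0,c)"] by simp
qed

lemma entry_bound: "j \<in> Basis \<Longrightarrow> i \<in> Basis \<Longrightarrow> \<bar>dx_fx (blinfun_apply A) j \<bullet> i\<bar> \<le> norm A"
proof -
  assume j: "j \<in> Basis" and i: "i \<in> Basis"
  have "\<bar>dx_fx (blinfun_apply A) j \<bullet> i\<bar> \<le> norm (dx_fx (blinfun_apply A) j)"
    using Basis_le_norm[OF i] .
  also have "\<dots> \<le> onorm (dx_fx (blinfun_apply A)) * norm j" by (rule onorm[OF bl_dx_fx])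
  also have "\<dots> \<le> norm A" using j on_dx_fx by simp
  finally show ?thesis .
qed


lemma minnorm_le: "minnorm A * norm x \<le> norm (A x)"
proof (cases "x = 0")
  case True then show ?thesis by simp
next
  case False
  then have nx: "norm x > 0" by simp
  have "minnorm A \<le> norm (A x) / norm x" unfolding minnorm_def
  proof (rule cSup_least)
    have "0 \<in> {c. \<forall>v. c * norm v \<le> norm (A v)}" by simp
    then show "{c. \<forall>v. c * norm v \<le> norm (A v)} \<noteq> {}" by blast
  next
    fix c assume "c \<in> {c. \<forall>v. c * norm v \<le> norm (A v)}"
    then have "c * norm x \<le> norm (A x)" by auto
    then show "c \<le> norm (A x) / norm x" using nx by (simp add: pos_le_divide_eq)
  qed
  then show ?thesis using nx by (simp add: pos_le_divide_eq)
qed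

lemma minnorm_nonneg: "0 \<le> minnorm (A :: real^'n \<Rightarrow> 'b::real_normed_vector)"
proof -
  define v0 :: "real^'n" where "v0 = vec 1"
  have v0: "v0 \<noteq> 0" by (simp add: v0_def vec_eq_iff)
  then have nv: "norm v0 > 0" by simp
  have "bdd_above {c. \<forall>v. c * norm v \<le> norm (A v)}"
  proof (rule bdd_aboveI)
    fix c assume "c \<in> {c. \<forall>v. c * norm v \<le> norm (A v)}"
    then have "c * norm v0 \<le> norm (A v0)" by auto
    then show "c \<le> norm (A v0) / norm v0" using nv by (simp add: pos_le_divide_eq)
  qed
  then show ?thesis unfolding minnorm_def by (rule cSup_upper[rotated]) auto
qed

lemma tdist_le: "tdist x y \<le> norm (x - y)"
proof -
  have "tdist x y \<le> norm (x - y - 0)" unfolding tdist_def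
    by (rule cINF_lower) (auto simp: intvecs_def intro!: bdd_belowI2[of _ 0])
  then show ?thesis by simp
qed



theorem corollary4p1:
  fixes f :: "('c::finite,'u::finite,'s::finite) pt \<Rightarrow> ('c,'u,'s) pt"
    and Df :: "('c,'u,'s) pt \<Rightarrow> ('c,'u,'s) pt \<Rightarrow>\<^sub>L ('c,'u,'s) pt"
    and R L :: real and z :: "('c,'u,'s) pt"
  assumes R: "0 < R" "R < RLam / 2"
    and L: "2 * R / RLam < L" "L < 1"
    and deriv: "\<And>w. w \<in> Dom R \<Longrightarrow> (f has_derivative blinfun_apply (Df w)) (at w within Dom R)"
    and cont: "continuous_on (Dom R) Df"
    and torus: "\<And>k w. k \<in> intvecs \<Longrightarrow> w \<in> Dom R \<Longrightarrow>
                  fst (f (fst w + k, snd w)) - fst (f w) \<in> intvecs \<and> snd (f (fst w + k, snd w)) = snd (f w)"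
    and rate: "rate_conditions_0 R L Df"
    and z: "z \<in> Dom R"
  shows "f ` (Ju z (1/L) \<inter> Dom R) \<subseteq> interior (Ju (f z) (1/L)) \<union> {f z}"
proof
  fix q assume "q \<in> f ` (Ju z (1/L) \<inter> Dom R)"
  then obtain w where wJ: "w \<in> Ju z (1/L)" and wD: "w \<in> Dom R" and q: "q = f w" by auto
  obtain B where B: "\<And>q. q \<in> Dom R \<Longrightarrow> norm (Df q) \<le> B" using Df_bounded[OF R(1) deriv cont torus] by blast
  have L4: "4 * R < L" using L(1) by (simp add: RLam_def)
  have Lpos: "0 < L" using L4 R(1) by linarith
  define a where "a = fst w - fst z"
  define b where "b = fst (snd w) - fst (snd z)"
  define c where "c = snd (snd w) - snd (snd z)"
  have v: "w - z = (a,b,c)" by (simp add: a_def b_def c_def prod_eq_iff)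
  have cone: "norm (a,c) \<le> (1/L) * norm b" using wJ by (simp add: Ju_def a_def b_def c_def)
  show "q \<in> interior (Ju (f z) (1/L)) \<union> {f z}"
  proof (cases "b = 0")
    case True
    then have "norm (a,c) \<le> 0" using cone by simp
    then have "(a,c) = 0" by simp
    then have "w - z = 0" using v True by (simp add: zero_prod_def)
    then show ?thesis using q by simp
  next
    case False
    then have nb: "norm b > 0" by simp

    define p where "p t = z + t *\<^sub>R (w - z)" for t :: real
    have convD: "convex (Dom R :: ('c,'u,'s) pt set)"
      unfolding Dom_def by (intro convex_Times convex_UNIV convex_cball)
    have pD: "p t \<in> Dom R" if "t \<in> {0..1}" for t
    proof -
      have "p t = (1 - t) *\<^sub>R z + t *\<^sub>R w" by (simp add: p_def algebra_simps)
      then show ?thesis using convexD[OF convD z wD, of "1 - t" t] that by simp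
    qed
    have p01: "p 0 = z" "p 1 = w" by (simp_all add: p_def)
    have vd: "((\<lambda>t. f (p t)) has_vector_derivative blinfun_apply (Df (p t)) (w - z)) (at t within {0..1})"
      if t: "t \<in> {0..1}" for t
    proof -
      have dp: "(p has_derivative (\<lambda>h. h *\<^sub>R (w - z))) (at t within {0..1})"
        unfolding p_def by (auto intro!: derivative_eq_intros)
      have "pD'": "p ` {0..1} \<subseteq> Dom R" using pD by auto
      have "((\<lambda>t. f (p t)) has_derivative (\<lambda>h. blinfun_apply (Df (p t)) (h *\<^sub>R (w - z)))) (at t within {0..1})"
        by (rule has_derivative_in_compose2[OF deriv pD' t dp])
      then show ?thesis unfolding has_vector_derivative_def by (simp add: blinfun.scaleR_right)
    qed
    have FTC: "((\<lambda>t. blinfun_apply (Df (p t)) (w - z)) has_integral (f w - f z)) {0..1}"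
      using fundamental_theorem_of_calculus[of 0 1 "\<lambda>t. f (p t)", OF _ vd] p01 by simp
    have cp: "continuous_on {0..1} (\<lambda>t. Df (p t))"
    proof (rule continuous_on_compose2[OF cont])
      show "continuous_on {0..1} p" unfolding p_def by (intro continuous_intros)
    qed (use pD in auto)
    have cpx: "continuous_on {0..1} (\<lambda>t. blinfun_apply (Df (p t)) x)" for x
      by (intro blinfun.continuous_on cp continuous_on_const)
    have int_dx: "(\<lambda>t. dx_fx (blinfun_apply (Df (p t))) x) integrable_on {0..1}" for x
      unfolding dx_fx_def by (intro integrable_continuous_real continuous_intros cpx)
    have int_dlyx: "(\<lambda>t. dly_fx (blinfun_apply (Df (p t))) x) integrable_on {0..1}" for x
      unfolding dly_fx_def by (cases x) (simp, intro integrable_continuous_real continuous_intros cpx)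
    define A where "A y = integral {0..1} (\<lambda>t. dx_fx (blinfun_apply (Df (p t))) y)" for y
    define E1 where "E1 = integral {0..1} (\<lambda>t. dly_fx (blinfun_apply (Df (p t))) (a,c))"
    have blx: "bounded_linear (\<lambda>u :: ('c,'u,'s) pt. fst (snd u))"
      by (intro bounded_linear_compose[OF bounded_linear_fst bounded_linear_snd])
    have "((\<lambda>t. fst (snd (blinfun_apply (Df (p t)) (w - z)))) has_integral fst (snd (f w - f z))) {0..1}"
      using has_integral_linear[OF FTC blx] by (simp add: o_def)
    moreover have "((\<lambda>t. fst (snd (blinfun_apply (Df (p t)) (w - z)))) has_integral (A b + E1)) {0..1}"
      unfolding v split_x A_def E1_def
      by (intro has_integral_add integrable_integral int_dx int_dlyx)
    ultimately have DX: "fst (snd (f w - f z)) = A b + E1" by (rule has_integral_unique)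
    have linA: "linear A"
    proof (rule linearI)
      fix x y show "A (x + y) = A x + A y" unfolding A_def
        by (simp add: linear_add[OF bounded_linear.linear[OF bl_dx_fx]] integral_add int_dx)
    next
      fix r x show "A (r *\<^sub>R x) = r *\<^sub>R A x" unfolding A_def
        by (simp add: linear_scale[OF bounded_linear.linear[OF bl_dx_fx]] integral_scaleR_right)
    qed
    define mid where "mid = p (1/2)"
    have midD: "mid \<in> Dom R" unfolding mid_def by (rule pD) simp
    have PD: "x \<in> Pset R y \<Longrightarrow> x \<in> Dom R" for x y by (simp add: Pset_def)
    have nbR: "norm b \<le> 2 * R"
    proof -
      have "norm b \<le> norm (fst (snd w)) + norm (fst (snd z))" unfolding b_def by (rule norm_triangle_ineq4)
      also have "\<dots> \<le> R + R" using wD z by (intro add_mono) (auto simp: Dom_def mem_Times_iff)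
      finally show ?thesis by simp
    qed
    have na: "norm a < 1/2"
    proof -
      have "norm a \<le> norm (a,c)" by (rule norm_fst_le)
      also have "\<dots> \<le> (1/L) * norm b" by (rule cone)
      also have "\<dots> \<le> (1/L) * (2 * R)" using nbR Lpos by (intro mult_left_mono) auto
      also have "\<dots> < 1/2" using L4 Lpos by (simp add: field_simps)
      finally show ?thesis .
    qed
    have pP: "p t \<in> Pset R mid" if t: "t \<in> {0..1}" for t
    proof -
      have "fst (p t) - fst mid = (t - 1/2) *\<^sub>R a" by (simp add: mid_def p_def v algebra_simps)
      then have "norm (fst (p t) - fst mid) = \<bar>t - 1/2\<bar> * norm a" by simp
      also have "\<dots> \<le> (1/2) * norm a" using t by (intro mult_right_mono) (auto simp: abs_if)
      also have "\<dots> \<le> RLam / 2" using na by (simp add: RLam_def)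
      finally show ?thesis using tdist_le[of "fst (p t)" "fst mid"] pD[OF t] by (simp add: Pset_def)
    qed
    have Gb: "\<bar>dx_fx (blinfun_apply (Df x)) j \<bullet> i\<bar> \<le> B" if "x \<in> Dom R" "j \<in> Basis" "i \<in> Basis" for x j i
      using entry_bound[OF that(2,3), of "Df x"] B[OF that(1)] by linarith
    have bddb: "bdd_below ((\<lambda>x. dx_fx (blinfun_apply (Df x)) j \<bullet> i) ` Pset R y)" if "j \<in> Basis" "i \<in> Basis" for j i y
    proof (rule bdd_belowI2)
      fix x assume "x \<in> Pset R y"
      then have "\<bar>dx_fx (blinfun_apply (Df x)) j \<bullet> i\<bar> \<le> B" using Gb[OF PD that] by blast
      then show "-B \<le> dx_fx (blinfun_apply (Df x)) j \<bullet> i" by linarith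
    qed
    have bdda: "bdd_above ((\<lambda>x. dx_fx (blinfun_apply (Df x)) j \<bullet> i) ` Pset R y)" if "j \<in> Basis" "i \<in> Basis" for j i y
    proof (rule bdd_aboveI2)
      fix x assume "x \<in> Pset R y"
      then have "\<bar>dx_fx (blinfun_apply (Df x)) j \<bullet> i\<bar> \<le> B" using Gb[OF PD that] by blast
      then show "dx_fx (blinfun_apply (Df x)) j \<bullet> i \<le> B" by linarith
    qed
    have AIM: "A \<in> interval_maps (\<lambda>w. dx_fx (blinfun_apply (Df w))) (Pset R mid)"
      unfolding interval_maps_def
    proof (intro CollectI conjI linA ballI)
      fix i j :: "real^'u" assume i: "i \<in> Basis" and j: "j \<in> Basis"
      have intG: "(\<lambda>t. dx_fx (blinfun_apply (Df (p t))) j \<bullet> i) integrable_on {0..1}"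
        using integrable_linear[OF int_dx[of j] bounded_linear_inner_left[of i]] by (simp add: o_def)
      have Aji: "A j \<bullet> i = integral {0..1} (\<lambda>t. dx_fx (blinfun_apply (Df (p t))) j \<bullet> i)"
        unfolding A_def using integral_linear[OF int_dx[of j] bounded_linear_inner_left[of i]] by (simp add: o_def)
      have "integral {0..1} (\<lambda>t::real. (INF w\<in>Pset R mid. dx_fx (blinfun_apply (Df w)) j \<bullet> i))
              \<le> integral {0..1} (\<lambda>t. dx_fx (blinfun_apply (Df (p t))) j \<bullet> i)"
      proof (rule integral_le[OF _ intG])
        show "(\<lambda>t::real. INF w\<in>Pset R mid. dx_fx (blinfun_apply (Df w)) j \<bullet> i) integrable_on {0..1}"
          by (rule integrable_const_ivl)
      qed (auto intro!: cINF_lower bddb[OF j i] pP)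
      then show "(INF w\<in>Pset R mid. dx_fx (blinfun_apply (Df w)) j \<bullet> i) \<le> A j \<bullet> i" using Aji by simp
      have "integral {0..1} (\<lambda>t. dx_fx (blinfun_apply (Df (p t))) j \<bullet> i)
              \<le> integral {0..1} (\<lambda>t::real. (SUP w\<in>Pset R mid. dx_fx (blinfun_apply (Df w)) j \<bullet> i))"
      proof (rule integral_le[OF intG])
        show "(\<lambda>t::real. SUP w\<in>Pset R mid. dx_fx (blinfun_apply (Df w)) j \<bullet> i) integrable_on {0..1}"
          by (rule integrable_const_ivl)
      qed (auto intro!: cSUP_upper bdda[OF j i] pP)
      then show "A j \<bullet> i \<le> (SUP w\<in>Pset R mid. dx_fx (blinfun_apply (Df w)) j \<bullet> i)" using Aji by simp
    qed
    have IMne: "dx_fx (blinfun_apply (Df y)) \<in> interval_maps (\<lambda>w. dx_fx (blinfun_apply (Df w))) (Pset R y)"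
      if y: "y \<in> Dom R" for y
    proof -
      have yP: "y \<in> Pset R y" using y tdist_le[of "fst y" "fst y"] by (simp add: Pset_def RLam_def)
      show ?thesis unfolding interval_maps_def
        by (auto intro!: bounded_linear.linear[OF bl_dx_fx] cINF_lower cSUP_upper bddb bdda yP)
    qed
    have msnn: "0 \<le> minnorm_set (interval_maps (\<lambda>w. dx_fx (blinfun_apply (Df w))) (Pset R y))"
      if y: "y \<in> Dom R" for y
      unfolding minnorm_set_def using IMne[OF y] by (intro cINF_greatest minnorm_nonneg) auto
    define I0 where "I0 = (INF z\<in>Dom R. minnorm_set (interval_maps (\<lambda>w. dx_fx (blinfun_apply (Df w))) (Pset R z)))"
    have I0A: "I0 \<le> minnorm A"
    proof -
      have "I0 \<le> minnorm_set (interval_maps (\<lambda>w. dx_fx (blinfun_apply (Df w))) (Pset R mid))"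
        unfolding I0_def by (rule cINF_lower[OF bdd_belowI2[of _ 0] midD]) (rule msnn)
      also have "\<dots> \<le> minnorm A" unfolding minnorm_set_def
        by (rule cINF_lower[OF bdd_belowI2[of _ 0] AIM]) (rule minnorm_nonneg)
      finally show ?thesis .
    qed
    define Kx where "Kx = (SUP z\<in>Dom R. onorm (dly_fx (blinfun_apply (Df z))))"
    have bddKx: "bdd_above ((\<lambda>z. onorm (dly_fx (blinfun_apply (Df z)))) ` Dom R)"
      by (rule bdd_aboveI2[of _ _ B]) (meson B on_dly_fx order_trans)
    have Kx_ge: "onorm (dly_fx (blinfun_apply (Df y))) \<le> Kx" if "y \<in> Dom R" for y :: "('c,'u,'s) pt"
      unfolding Kx_def by (rule cSUP_upper[OF that bddKx])
    have Kx0: "0 \<le> Kx" using Kx_ge[OF z] onorm_pos_le[OF bl_dly_fx, of "Df z"] by linarith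
    have E1b: "norm E1 \<le> Kx * norm (a,c)"
    proof -
      have "norm E1 \<le> Kx * norm (a,c) * Henstock_Kurzweil_Integration.content {0..(1::real)}" unfolding E1_def
      proof (rule has_integral_bound_real[where S="{}"])
        show "0 \<le> Kx * norm (a, c)" using Kx0 by simp
        fix t :: real assume "t \<in> {0..1} - {}"
        then have t: "t \<in> {0..1}" by simp
        have "norm (dly_fx (blinfun_apply (Df (p t))) (a,c)) \<le> onorm (dly_fx (blinfun_apply (Df (p t)))) * norm (a,c)"
          by (rule onorm[OF bl_dly_fx])
        also have "\<dots> \<le> Kx * norm (a,c)" by (intro mult_right_mono Kx_ge pD t) simp
        finally show "norm (dly_fx (blinfun_apply (Df (p t))) (a,c)) \<le> Kx * norm (a,c)" .
      qed (use integrable_integral[OF int_dlyx] in simp_all)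
      then show ?thesis by simp
    qed
    define xi where "xi = I0 - (1/L) * Kx"
    have xi_eq: "xi = xi_u1P R L Df" unfolding xi_def I0_def Kx_def xi_u1P_def by simp
    have DXb: "xi * norm b \<le> norm (fst (snd (f w - f z)))"
    proof -
      have "xi * norm b = I0 * norm b - Kx * ((1/L) * norm b)" by (simp add: xi_def algebra_simps)
      also have "\<dots> \<le> minnorm A * norm b - Kx * norm (a,c)"
        using mult_right_mono[OF I0A norm_ge_zero[of b]] mult_left_mono[OF cone Kx0] by linarith
      also have "\<dots> \<le> norm (A b) - norm E1" using minnorm_le[of A b] E1b by linarith
      also have "\<dots> \<le> norm (A b + E1)" using norm_triangle_ineq4[of "A b + E1" E1] by simp
      finally show ?thesis using DX by simp
    qed
    define hY where "hY u = (fst u, snd (snd u))" for u :: "('c,'u,'s) pt"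
    have blY: "bounded_linear hY" unfolding hY_def
      by (intro bounded_linear_Pair bounded_linear_fst bounded_linear_compose[OF bounded_linear_snd bounded_linear_snd])
    define Mu where "Mu = mu_cs1 R L Df"
    have bddMu: "bdd_above ((\<lambda>z. onorm (dly_fly (blinfun_apply (Df z))) + L * onorm (dx_fly (blinfun_apply (Df z)))) ` Dom R)"
    proof (rule bdd_aboveI2[of _ _ "B + L * B"])
      fix y :: "('c,'u,'s) pt" assume "y \<in> Dom R"
      then have "norm (Df y) \<le> B" by (rule B)
      moreover have "onorm (dly_fly (blinfun_apply (Df y))) \<le> norm (Df y)" by (rule on_dly_fly)
      moreover have "onorm (dx_fly (blinfun_apply (Df y))) \<le> norm (Df y)" by (rule on_dx_fly)
      ultimately have "onorm (dly_fly (blinfun_apply (Df y))) \<le> B" "onorm (dx_fly (blinfun_apply (Df y))) \<le> B" by linarith+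
      moreover then have "L * onorm (dx_fly (blinfun_apply (Df y))) \<le> L * B" using Lpos by (intro mult_left_mono) auto
      ultimately show "onorm (dly_fly (blinfun_apply (Df y))) + L * onorm (dx_fly (blinfun_apply (Df y))) \<le> B + L * B"
        by linarith
    qed
    have Mu_ge: "onorm (dly_fly (blinfun_apply (Df y))) + L * onorm (dx_fly (blinfun_apply (Df y))) \<le> Mu"
      if "y \<in> Dom R" for y :: "('c,'u,'s) pt"
      unfolding Mu_def mu_cs1_def by (rule cSUP_upper[OF that bddMu])
    have DYb: "norm (hY (f w - f z)) \<le> Mu * (norm b / L)"
    proof -
      have HI: "((\<lambda>t. hY (blinfun_apply (Df (p t)) (w - z))) has_integral hY (f w - f z)) {0..1}"
        using has_integral_linear[OF FTC blY] by (simp add: o_def)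
      have pw: "norm (hY (blinfun_apply (Df (p t)) (w - z))) \<le> Mu * (norm b / L)" if t: "t \<in> {0..1}" for t
      proof -
        let ?o1 = "onorm (dly_fly (blinfun_apply (Df (p t))))"
        let ?o2 = "onorm (dx_fly (blinfun_apply (Df (p t))))"
        have o1: "0 \<le> ?o1" by (rule onorm_pos_le[OF bl_dly_fly])
        have "hY (blinfun_apply (Df (p t)) (w - z)) = dly_fly (blinfun_apply (Df (p t))) (a,c) + dx_fly (blinfun_apply (Df (p t))) b"
          unfolding v hY_def by (rule split_ly)
        then have "norm (hY (blinfun_apply (Df (p t)) (w - z))) \<le> norm (dly_fly (blinfun_apply (Df (p t))) (a,c)) + norm (dx_fly (blinfun_apply (Df (p t))) b)"
          by (simp add: norm_triangle_ineq)
        also have "\<dots> \<le> ?o1 * norm (a,c) + ?o2 * norm b"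
          by (intro add_mono onorm[OF bl_dly_fly] onorm[OF bl_dx_fly])
        also have "\<dots> \<le> ?o1 * ((1/L) * norm b) + ?o2 * norm b"
          using mult_left_mono[OF cone o1] by simp
        also have "\<dots> = (?o1 + L * ?o2) * (norm b / L)" using Lpos by (simp add: field_simps)
        also have "\<dots> \<le> Mu * (norm b / L)"
          using Mu_ge[OF pD[OF t]] nb Lpos by (intro mult_right_mono) auto
        finally show ?thesis .
      qed
      have "norm (hY (f w - f z)) \<le> Mu * (norm b / L) * Henstock_Kurzweil_Integration.content {0..(1::real)}"
      proof (rule has_integral_bound_real[where S="{}", OF _ _ HI])
        show "0 \<le> Mu * (norm b / L)" using pw[of 0] norm_ge_zero[of "hY (blinfun_apply (Df (p 0)) (w - z))"] by (simp del: norm_ge_zero)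
      qed (use pw in simp_all)
      then show ?thesis by simp
    qed
    have rate2: "Mu < xi" using rate xi_eq unfolding rate_conditions_0_def Mu_def by simp
    have strict: "norm (hY (f w - f z)) < (1/L) * norm (fst (snd (f w - f z)))"
    proof -
      have "Mu * (norm b / L) < xi * (norm b / L)" using rate2 nb Lpos by (intro mult_strict_right_mono) auto
      also have "\<dots> = (1/L) * (xi * norm b)" by simp
      also have "\<dots> \<le> (1/L) * norm (fst (snd (f w - f z)))" using DXb Lpos by (intro mult_left_mono) auto
      finally show ?thesis using DYb by linarith
    qed
    define Ob where "Ob = {q. norm (fst q - fst (f z), snd (snd q) - snd (snd (f z)))
                          < (1/L) * norm (fst (snd q) - fst (snd (f z)))}"
    have "open Ob" unfolding Ob_def
      by (intro open_Collect_less continuous_intros)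
    moreover have "Ob \<subseteq> Ju (f z) (1/L)" unfolding Ob_def Ju_def by (auto intro: less_imp_le)
    ultimately have "Ob \<subseteq> interior (Ju (f z) (1/L))" by (rule interior_maximal[rotated])
    moreover have "f w \<in> Ob" using strict unfolding Ob_def hY_def by simp
    ultimately show ?thesis using q by auto
  qed
qed

end
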